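(* Let $X\subset\mathbb{R}^n$ be amenable at $\bar x\in X$. Then $X$ is nearly convex at $\bar x$ (and hence nearly radial at $\bar x$).
   Context: The tangent cone is $T_X(x)=\{\lim t_r^{-1}(x_r-x):t_r\downarrow0,\ x_r\to x,\ x_r\in X\}$. $X$ is nearly convex at $\bar x$ if $\operatorname{dist}(y,x+T_X(x))=o(\|x-y\|)$ as $x,y\to\bar x$ in $X$. $X$ is nearly radial at $\bar x$ if $\operatorname{dist}(\bar x,x+T_X(x))=o(\|x-\bar x\|)$ as $x\to\bar x$ in $X$. $X$ is amenable at $\bar x$ if there exist an open neighbourhood $V$ of $\bar x$, a $C^1$ map $F:V\to\mathbb{R}^m$ and a closed convex set $D\subset\mathbb{R}^m$ with $X\cap V=\{x\in V:F(x)\in D\}$ and $N_D(F(\bar x))\cap\ker(\nabla F(\bar x)^* )=\{0\}$, where $N_D$ is the normal cone of convex analysis to $D$ and $\nabla F(\bar x)^*$ the adjoint of the Jacobian. *)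

theory Defs
  imports "HOL-Analysis.Analysis"
begin

definition tangent_cone :: "'a::real_normed_vector set \<Rightarrow> 'a \<Rightarrow> 'a set" where
  "tangent_cone X x = {v. \<exists>t xs. (\<forall>r. t r > 0) \<and> t \<longlonglongrightarrow> 0 \<and>
      (\<forall>r. xs r \<in> X) \<and> xs \<longlonglongrightarrow> x \<and>
      (\<lambda>r. (1 / t r) *\<^sub>R (xs r - x)) \<longlonglongrightarrow> v}"

definition nearly_convex :: "'a::real_normed_vector set \<Rightarrow> 'a \<Rightarrow> bool" where
  "nearly_convex X xbar \<longleftrightarrow>
     (\<forall>\<epsilon>>0. \<exists>\<delta>>0. \<forall>x\<in>X. \<forall>y\<in>X. dist x xbar < \<delta> \<and> dist y xbar < \<delta> \<longrightarrow>
        infdist y ((\<lambda>v. x + v) ` tangent_cone X x) \<le> \<epsilon> * norm (x - y))"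

definition nearly_radial :: "'a::real_normed_vector set \<Rightarrow> 'a \<Rightarrow> bool" where
  "nearly_radial X xbar \<longleftrightarrow>
     (\<forall>\<epsilon>>0. \<exists>\<delta>>0. \<forall>x\<in>X. dist x xbar < \<delta> \<longrightarrow>
        infdist xbar ((\<lambda>v. x + v) ` tangent_cone X x) \<le> \<epsilon> * norm (x - xbar))"

definition normal_cone_convex :: "'b::real_inner set \<Rightarrow> 'b \<Rightarrow> 'b set" where
  "normal_cone_convex D y = {w. \<forall>d\<in>D. inner w (d - y) \<le> 0}"

text \<open>Amenability of X at xbar, with the target space R^m represented by the
  euclidean space type 'b (given by the TYPE argument).\<close>
definition amenable :: "'b::euclidean_space itself \<Rightarrow> 'a::euclidean_space set \<Rightarrow> 'a \<Rightarrow> bool" where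
  "amenable _ X xbar \<longleftrightarrow>
     (\<exists>V (F :: 'a \<Rightarrow> 'b) (F' :: 'a \<Rightarrow> 'a \<Rightarrow>\<^sub>L 'b) (D :: 'b set).
        open V \<and> xbar \<in> V \<and>
        (\<forall>x\<in>V. (F has_derivative blinfun_apply (F' x)) (at x)) \<and> continuous_on V F' \<and>
        closed D \<and> convex D \<and>
        X \<inter> V = {x\<in>V. F x \<in> D} \<and>
        (\<forall>w. w \<in> normal_cone_convex D (F xbar) \<and> (\<forall>h. inner w (F' xbar h) = 0) \<longrightarrow> w = 0))"

end

theory Submission
  imports Defs
begin

locale amen =
  fixes X :: "'a::euclidean_space set" and xbar :: 'a
    and V :: "'a set" and F :: "'a \<Rightarrow> 'b::euclidean_space" and F' :: "'a \<Rightarrow> 'a \<Rightarrow>\<^sub>L 'b"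
    and D :: "'b set"
  assumes xbarX: "xbar \<in> X" and openV: "open V" and xbarV: "xbar \<in> V"
    and derF: "\<And>x. x \<in> V \<Longrightarrow> (F has_derivative blinfun_apply (F' x)) (at x)"
    and contF': "continuous_on V F'"
    and closedD: "closed D" and convexD: "convex D"
    and XV: "X \<inter> V = {x\<in>V. F x \<in> D}"
    and CQ: "\<And>w. w \<in> normal_cone_convex D (F xbar) \<Longrightarrow> (\<forall>h. inner w (F' xbar h) = 0) \<Longrightarrow> w = 0"
begin

lemma FxbarD: "F xbar \<in> D" using XV xbarX xbarV by blast

lemma isContF': "isCont F' xbar"
  using contF' openV xbarV continuous_on_eq_continuous_at by blast

lemma uniform_CQ:
  "\<exists>c>0. \<exists>r>0. \<forall>u d n. dist u xbar \<le> r \<longrightarrow> d \<in> D \<longrightarrow> dist d (F xbar) \<le> r \<longrightarrow>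
      n \<in> normal_cone_convex D d \<longrightarrow> norm n = 1 \<longrightarrow> (\<exists>h. norm h = 1 \<and> inner n (F' u h) \<ge> c)"
proof (rule ccontr)
  assume "\<not> ?thesis"
  then have "\<forall>k::nat. \<exists>u d n. dist u xbar \<le> 1 / real (Suc k) \<and> d \<in> D \<and> dist d (F xbar) \<le> 1 / real (Suc k) \<and>
      n \<in> normal_cone_convex D d \<and> norm n = 1 \<and> (\<forall>h. norm h = 1 \<longrightarrow> inner n (F' u h) < 1 / real (Suc k))"
    by (metis not_le of_nat_0_less_iff zero_less_Suc zero_less_divide_1_iff)
  then obtain u d n where und: "\<And>k. dist (u k) xbar \<le> 1 / real (Suc k) \<and> d k \<in> D \<and> dist (d k) (F xbar) \<le> 1 / real (Suc k) \<and>
      n k \<in> normal_cone_convex D (d k) \<and> norm (n k) = 1 \<and> (\<forall>h. norm h = 1 \<longrightarrow> inner (n k) (F' (u k) h) < 1 / real (Suc k))"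
    by metis
  have u1: "\<And>k. dist (u k) xbar \<le> 1 / real (Suc k)" and d1: "\<And>k. d k \<in> D"
    and d2: "\<And>k. dist (d k) (F xbar) \<le> 1 / real (Suc k)"
    and n1: "\<And>k. n k \<in> normal_cone_convex D (d k)" and n2: "\<And>k. norm (n k) = 1"
    and n3: "\<And>k h. norm h = 1 \<Longrightarrow> inner (n k) (F' (u k) h) < 1 / real (Suc k)"
    using und by blast+
  have "bounded (range n)" using n2 by (auto intro!: boundedI[of _ 1])
  then obtain n0 \<sigma> where \<sigma>: "strict_mono \<sigma>" and nlim: "(n \<circ> \<sigma>) \<longlonglongrightarrow> n0"
    using bounded_imp_convergent_subsequence by blast
  have inv0: "(\<lambda>k. 1 / real (Suc (\<sigma> k))) \<longlonglongrightarrow> 0"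
    using LIMSEQ_subseq_LIMSEQ[OF LIMSEQ_Suc[OF lim_1_over_n] \<sigma>] by (simp add: o_def)
  have ulim: "(\<lambda>k. u (\<sigma> k)) \<longlonglongrightarrow> xbar"
  proof -
    have "(\<lambda>k. dist (u (\<sigma> k)) xbar) \<longlonglongrightarrow> 0"
      using Lim_null_comparison[of "\<lambda>k. dist (u (\<sigma> k)) xbar" "\<lambda>k. 1 / real (Suc (\<sigma> k))" sequentially] inv0 u1
      by simp
    then show ?thesis using tendsto_dist_iff by blast
  qed
  have dlim: "(\<lambda>k. d (\<sigma> k)) \<longlonglongrightarrow> F xbar"
  proof -
    have "(\<lambda>k. dist (d (\<sigma> k)) (F xbar)) \<longlonglongrightarrow> 0"
      using Lim_null_comparison[of "\<lambda>k. dist (d (\<sigma> k)) (F xbar)" "\<lambda>k. 1 / real (Suc (\<sigma> k))" sequentially] inv0 d2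
      by simp
    then show ?thesis using tendsto_dist_iff by blast
  qed
  have nlim': "(\<lambda>k. n (\<sigma> k)) \<longlonglongrightarrow> n0" using nlim by (simp add: o_def)
  have n0norm: "norm n0 = 1"
  proof -
    have "(\<lambda>k. norm (n (\<sigma> k))) \<longlonglongrightarrow> norm n0" using tendsto_norm[OF nlim'] .
    moreover have "(\<lambda>k. norm (n (\<sigma> k))) = (\<lambda>k. 1)" using n2 by simp
    ultimately show ?thesis using LIMSEQ_unique tendsto_const by metis
  qed
  have n0N: "n0 \<in> normal_cone_convex D (F xbar)"
    unfolding normal_cone_convex_def
  proof (intro CollectI ballI)
    fix e assume e: "e \<in> D"
    have "(\<lambda>k. inner (n (\<sigma> k)) (e - d (\<sigma> k))) \<longlonglongrightarrow> inner n0 (e - F xbar)"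
      by (intro tendsto_intros nlim' dlim)
    moreover have "\<And>k. inner (n (\<sigma> k)) (e - d (\<sigma> k)) \<le> 0"
      using n1 d1 e unfolding normal_cone_convex_def by blast
    ultimately show "inner n0 (e - F xbar) \<le> 0"
      by (intro LIMSEQ_le_const2[where a=0]) auto
  qed
  have F'lim: "(\<lambda>k. F' (u (\<sigma> k))) \<longlonglongrightarrow> F' xbar"
    using isCont_tendsto_compose[OF isContF' ulim] .
  have le0: "inner n0 (F' xbar h) \<le> 0" if h: "norm h = 1" for h
  proof -
    have "(\<lambda>k. inner (n (\<sigma> k)) (F' (u (\<sigma> k)) h) - 1 / real (Suc (\<sigma> k))) \<longlonglongrightarrow> inner n0 (F' xbar h) - 0"
      by (intro tendsto_intros nlim' F'lim inv0 bounded_bilinear.tendsto[OF bounded_bilinear_blinfun_apply])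
    moreover have "\<And>k. inner (n (\<sigma> k)) (F' (u (\<sigma> k)) h) - 1 / real (Suc (\<sigma> k)) \<le> 0"
      using n3[OF h] by (simp add: less_imp_le)
    ultimately have "inner n0 (F' xbar h) - 0 \<le> 0"
      by (intro LIMSEQ_le_const2[where a=0]) auto
    then show ?thesis by simp
  qed
  have "\<forall>h. inner n0 (F' xbar h) = 0"
  proof
    fix h :: 'a
    show "inner n0 (F' xbar h) = 0"
    proof (cases "h = 0")
      case True then show ?thesis by (simp add: blinfun.zero_right)
    next
      case False
      define h1 where "h1 = (1 / norm h) *\<^sub>R h"
      have n1: "norm h1 = 1" "norm (- h1) = 1" using False by (auto simp: h1_def)
      have "inner n0 (F' xbar h1) \<le> 0" "inner n0 (F' xbar (- h1)) \<le> 0"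
        using le0 n1 by auto
      then have "inner n0 (F' xbar h1) = 0" by (simp add: blinfun.minus_right)
      then have "(1 / norm h) * inner n0 (F' xbar h) = 0"
        by (simp add: h1_def blinfun.scaleR_right)
      then show ?thesis using False by simp
    qed
  qed
  then have "n0 = 0" using CQ n0N by blast
  then show False using n0norm by simp
qed


lemma contF: "continuous_on V F"
  using derF by (intro continuous_at_imp_continuous_on ballI has_derivative_continuous) blast

lemma isContF: "isCont F xbar"
  using contF openV xbarV continuous_on_eq_continuous_at by blast

lemma error_bound:
  "\<exists>\<kappa>>0. \<exists>\<rho>>0. \<forall>z. dist z xbar < \<rho> \<longrightarrow> (\<exists>p\<in>X. dist z p \<le> \<kappa> * infdist (F z) D)"
proof -
  obtain c r where c: "c > 0" and r: "r > 0" and cr: "\<And>u d n. dist u xbar \<le> r \<Longrightarrow> d \<in> D \<Longrightarrow> dist d (F xbar) \<le> r \<Longrightarrow>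
      n \<in> normal_cone_convex D d \<Longrightarrow> norm n = 1 \<Longrightarrow> (\<exists>h. norm h = 1 \<and> inner n (F' u h) \<ge> c)"
    using uniform_CQ by blast
  obtain R0 where R0: "R0 > 0" "cball xbar R0 \<subseteq> V"
    using openV xbarV open_contains_cball by blast
  obtain R1 where R1: "R1 > 0" "\<And>u. dist u xbar < R1 \<Longrightarrow> dist (F u) (F xbar) < r/2"
    using isContF r unfolding continuous_at_eps_delta by (metis half_gt_zero)
  define R where "R = min (min R0 r) (R1/2)"
  have R: "R > 0" "R \<le> r" "cball xbar R \<subseteq> V" "\<And>u. dist u xbar \<le> R \<Longrightarrow> dist u xbar < R1"
    using R0 R1 r by (auto simp: R_def)
  define \<alpha> where "\<alpha> = c/2"
  have \<alpha>: "\<alpha> > 0" using c by (simp add: \<alpha>_def)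
  obtain R2 where R2: "R2 > 0" "\<And>u. dist u xbar < R2 \<Longrightarrow> dist (F u) (F xbar) < \<alpha>*R/2"
    using isContF \<alpha> R unfolding continuous_at_eps_delta by (metis half_gt_zero mult_pos_pos)
  define \<rho> where "\<rho> = min (R/2) R2"
  have Dne: "D \<noteq> {}" using FxbarD by blast
  have main: "\<exists>p\<in>X. dist z p \<le> (1/\<alpha>) * infdist (F z) D" if z: "dist z xbar < \<rho>" for z
  proof -
    define \<phi> where "\<phi> v = infdist (F v) D" for v
    define \<psi> where "\<psi> v = \<phi> v + \<alpha> * dist v z" for v
    have \<phi>z: "\<phi> z < \<alpha>*R/2"
      using infdist_le[OF FxbarD, of "F z"] R2(2)[of z] z by (simp add: \<phi>_def \<rho>_def)
    define K where "K = cball z (R/2)"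
    have KR: "K \<subseteq> cball xbar R"
    proof
      fix v assume "v \<in> K"
      then have "dist v z \<le> R/2" by (simp add: K_def dist_commute)
      moreover have "dist z xbar < R/2" using z by (simp add: \<rho>_def)
      ultimately show "v \<in> cball xbar R" using dist_triangle[of v xbar z] by (simp add: dist_commute)
    qed
    have KV: "K \<subseteq> V" using KR R(3) by blast
    have cF: "continuous_on K F" using continuous_on_subset[OF contF KV] .
    have c\<psi>: "continuous_on K \<psi>" unfolding \<psi>_def \<phi>_def
      by (intro continuous_on_add continuous_on_infdist cF continuous_on_mult continuous_on_const continuous_on_dist continuous_on_id)
    have Kc: "compact K" and Kne: "K \<noteq> {}" using R by (auto simp: K_def)
    obtain u where uK: "u \<in> K" and umin: "\<And>v. v \<in> K \<Longrightarrow> \<psi> u \<le> \<psi> v"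
      using continuous_attains_inf[OF Kc Kne c\<psi>] by blast
    have zK: "z \<in> K" using R by (simp add: K_def)
    have "\<psi> u \<le> \<psi> z" using umin zK .
    then have aduz: "\<alpha> * dist u z \<le> \<phi> z" using infdist_nonneg[of "F u" D] by (simp add: \<psi>_def \<phi>_def)
    then have duz: "dist u z \<le> \<phi> z / \<alpha>" using \<alpha> by (simp add: field_simps)
    have "\<alpha> * dist u z < \<alpha> * (R/2)" using aduz \<phi>z by simp
    then have duz2: "dist u z < R/2" using \<alpha> by simp
    have "u \<in> cball xbar R" using uK KR by blast
    then have uR: "dist u xbar \<le> R" by (simp add: dist_commute)
    have uV: "u \<in> V" using uK KV by blast
    have \<phi>u: "\<phi> u = 0"
    proof (rule ccontr)
      assume ne: "\<phi> u \<noteq> 0"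
      obtain d where dD: "d \<in> D" and dd: "infdist (F u) D = dist (F u) d"
        using infdist_attains_inf[OF closedD Dne] by metis
      have "dist (F u) d \<le> dist (F u) (F xbar)" using infdist_le[OF FxbarD, of "F u"] dd by simp
      moreover have "dist (F u) (F xbar) < r/2" using R1(2) R(4) uR by blast
      ultimately have "dist d (F xbar) \<le> r" using dist_triangle[of d "F xbar" "F u"] by (simp add: dist_commute)
      define a where "a = F u - d"
      have a0: "a \<noteq> 0" using ne dd by (simp add: \<phi>_def a_def)
      define n where "n = (1 / norm a) *\<^sub>R a"
      have nn: "norm n = 1" using a0 by (simp add: n_def)
      have nN: "n \<in> normal_cone_convex D d" unfolding normal_cone_convex_def
      proof (intro CollectI ballI)
        fix e assume eD: "e \<in> D"
        have "\<forall>y\<in>D. dist (F u) d \<le> dist (F u) y" using dd infdist_le by metis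
        then have "inner a (e - d) \<le> 0" unfolding a_def by (rule any_closest_point_dot[OF convexD closedD dD eD])
        then show "inner n (e - d) \<le> 0" by (simp add: n_def divide_nonpos_nonneg)
      qed
      obtain h where h1: "norm h = 1" and hc: "inner n (F' u h) \<ge> c"
      proof -
        have "dist u xbar \<le> r" using uR R(2) by linarith
        then show ?thesis using cr[OF _ dD \<open>dist d (F xbar) \<le> r\<close> nN nn] that by blast
      qed
      define g where "g t = norm (F (u - t *\<^sub>R h) - d) + (c/2) * t" for t
      have Du: "((\<lambda>t. u - t *\<^sub>R h) has_derivative (\<lambda>s. - (s *\<^sub>R h))) (at 0)"
        by (auto intro!: derivative_eq_intros)
      have DF: "(F has_derivative F' u) (at ((\<lambda>t. u - t *\<^sub>R h) 0))" using derF[OF uV] by simp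
      have D1: "((\<lambda>t. F (u - t *\<^sub>R h)) has_derivative (\<lambda>s. F' u (- (s *\<^sub>R h)))) (at 0)"
        using has_derivative_compose[OF Du DF] by simp
      have D1': "((\<lambda>t. F (u - t *\<^sub>R h) - d) has_derivative (\<lambda>s. F' u (- (s *\<^sub>R h)))) (at 0)"
        using has_derivative_diff[OF D1 has_derivative_const[of d]] by simp
      have Dn: "((\<lambda>x. norm x) has_derivative (\<lambda>y. inner y (sgn a))) (at ((\<lambda>t. F (u - t *\<^sub>R h) - d) 0))"
        using has_derivative_norm[OF a0] by (simp add: a_def)
      have D2: "((\<lambda>t. norm (F (u - t *\<^sub>R h) - d)) has_derivative (\<lambda>s. inner (F' u (- (s *\<^sub>R h))) (sgn a))) (at 0)"
        using has_derivative_compose[OF D1' Dn] by simp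
      define L where "L = - inner (F' u h) (sgn a) + c/2"
      have Dl: "((\<lambda>t. (c/2) * t) has_derivative (\<lambda>s. (c/2) * s)) (at 0)"
        by (auto intro!: derivative_eq_intros)
      have D3: "(g has_derivative (\<lambda>s. L * s)) (at 0)"
        unfolding g_def
        by (rule has_derivative_eq_rhs[OF has_derivative_add[OF D2 Dl]])
           (auto simp: L_def blinfun.minus_right blinfun.scaleR_right algebra_simps)
      then have "DERIV g 0 :> L" by (simp add: has_field_derivative_def)
      have sa: "sgn a = n" by (simp add: n_def sgn_div_norm inverse_eq_divide)
      have "L < 0" using hc c by (simp add: L_def sa inner_commute)
      then obtain \<delta> where \<delta>: "\<delta> > 0" "\<And>t. t > 0 \<Longrightarrow> t < \<delta> \<Longrightarrow> g 0 > g (0 + t)"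
        using DERIV_neg_dec_right[OF \<open>DERIV g 0 :> L\<close>] by blast
      define t0 where "t0 = min (\<delta>/2) ((R/2 - dist u z)/2)"
      have t0le: "t0 \<le> (R/2 - dist u z)/2" "t0 \<le> \<delta>/2" unfolding t0_def by linarith+
      have t0a: "t0 > 0" using \<delta>(1) duz2 unfolding t0_def by simp
      have t0c: "dist u z + t0 < R/2"
      proof -
        have "dist u z + t0 \<le> dist u z + (R/2 - dist u z)/2" using t0le(1) by simp
        also have "\<dots> < R/2" using duz2 by (simp add: field_simps)
        finally show ?thesis .
      qed
      have t0: "t0 > 0" "t0 < \<delta>" "dist u z + t0 < R/2"
        using t0a t0le \<delta>(1) t0c by linarith+
      define v where "v = u - t0 *\<^sub>R h"
      have "dist v u = t0" using t0 h1 by (simp add: v_def dist_norm)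
      then have dvz: "dist v z \<le> dist u z + t0" using dist_triangle[of v z u] by simp
      then have vK: "v \<in> K" using t0 by (simp add: K_def dist_commute)
      have "\<phi> v \<le> norm (F v - d)" using infdist_le[OF dD, of "F v"] by (simp add: \<phi>_def dist_norm)
      then have "\<psi> v \<le> norm (F v - d) + \<alpha> * (dist u z + t0)"
        using dvz \<alpha> unfolding \<psi>_def by (smt (verit) mult_left_mono)
      also have "\<dots> = g t0 + \<alpha> * dist u z" by (simp add: g_def v_def \<alpha>_def algebra_simps)
      also have "\<dots> < g 0 + \<alpha> * dist u z" using \<delta>(2)[OF t0(1,2)] by simp
      also have "g 0 = \<phi> u" using dd by (simp add: g_def \<phi>_def dist_norm)
      finally have "\<psi> v < \<psi> u" by (simp add: \<psi>_def)
      then show False using umin[OF vK] by simp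
    qed
    have "F u \<in> D" using \<phi>u in_closed_iff_infdist_zero[OF closedD Dne] by (simp add: \<phi>_def)
    then have "u \<in> X" using XV uV by blast
    moreover have "dist z u \<le> (1/\<alpha>) * \<phi> z" using duz by (simp add: dist_commute)
    ultimately show ?thesis unfolding \<phi>_def by blast
  qed
  have "\<rho> > 0" using R R2 by (simp add: \<rho>_def)
  moreover have "1/\<alpha> > 0" using \<alpha> by simp
  ultimately show ?thesis using main by blast
qed


lemma zero_tangent: "x \<in> X \<Longrightarrow> 0 \<in> tangent_cone X x"
proof -
  assume xX: "x \<in> X"
  have L: "(\<lambda>r. 1 / real (Suc r)) \<longlonglongrightarrow> 0" by (rule LIMSEQ_Suc[OF lim_1_over_n])
  have "(\<forall>r. (1 / real (Suc r)) > 0) \<and> (\<lambda>r. 1 / real (Suc r)) \<longlonglongrightarrow> 0 \<and>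
      (\<forall>r. (\<lambda>r. x) r \<in> X) \<and> (\<lambda>r. x) \<longlonglongrightarrow> x \<and>
      (\<lambda>r. (1 / (1 / real (Suc r))) *\<^sub>R ((\<lambda>r. x) r - x)) \<longlonglongrightarrow> 0"
    using L xX by simp
  then show ?thesis unfolding tangent_cone_def by (intro CollectI exI)
qed

lemma seg_ball: fixes x y c :: 'a shows "x \<in> ball c r \<Longrightarrow> y \<in> ball c r \<Longrightarrow> 0 \<le> t \<Longrightarrow> t \<le> 1 \<Longrightarrow> x + t *\<^sub>R (y - x) \<in> ball c r"
proof -
  assume a: "x \<in> ball c r" "y \<in> ball c r" "0 \<le> t" "t \<le> 1"
  have "(1 - t) *\<^sub>R x + t *\<^sub>R y \<in> ball c r"
    using Convex.convexD[OF convex_ball a(1,2), of "1-t" t] a(3,4) by simp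
  moreover have "(1 - t) *\<^sub>R x + t *\<^sub>R y = x + t *\<^sub>R (y - x)" by (simp add: algebra_simps)
  ultimately show ?thesis by simp
qed

lemma near_convex: "nearly_convex X xbar"
  unfolding nearly_convex_def
proof (intro allI impI)
  fix \<epsilon> :: real assume \<epsilon>: "\<epsilon> > 0"
  obtain \<kappa> \<rho> where \<kappa>: "\<kappa> > 0" and \<rho>: "\<rho> > 0"
    and eb: "\<And>z. dist z xbar < \<rho> \<Longrightarrow> \<exists>p\<in>X. dist z p \<le> \<kappa> * infdist (F z) D"
    using error_bound by blast
  define \<eta> where "\<eta> = \<epsilon> / \<kappa>"
  have \<eta>: "\<eta> > 0" using \<epsilon> \<kappa> by (simp add: \<eta>_def)
  obtain R0 where R0: "R0 > 0" "ball xbar R0 \<subseteq> V"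
    using openV xbarV open_contains_ball by blast
  obtain R3 where R3: "R3 > 0" "\<And>u. dist u xbar < R3 \<Longrightarrow> dist (F' u) (F' xbar) < \<eta>/2"
    using isContF' \<eta> unfolding continuous_at_eps_delta by (metis half_gt_zero)
  define \<delta> where "\<delta> = min (min \<rho> R0) R3"
  define S where "S = ball xbar \<delta>"
  have SV: "S \<subseteq> V" using R0 by (auto simp: S_def \<delta>_def)
  have S\<rho>: "\<And>u. u \<in> S \<Longrightarrow> dist u xbar < \<rho>" by (auto simp: S_def \<delta>_def dist_commute)
  have SF': "\<And>u. u \<in> S \<Longrightarrow> dist (F' u) (F' xbar) < \<eta>/2"
    using R3 by (auto simp: S_def \<delta>_def dist_commute)
  have main: "infdist y ((\<lambda>v. x + v) ` tangent_cone X x) \<le> \<epsilon> * norm (x - y)"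
    if xX: "x \<in> X" and yX: "y \<in> X" and xS: "x \<in> S" and yS: "y \<in> S" for x y
  proof (cases "x = y")
    case True
    have "x + 0 \<in> (\<lambda>v. x + v) ` tangent_cone X x" using zero_tangent[OF xX] by blast
    then have "infdist y ((\<lambda>v. x + v) ` tangent_cone X x) \<le> dist y (x + 0)" by (rule infdist_le)
    then show ?thesis using True by simp
  next
    case False
    define w where "w = y - x"
    have w0: "w \<noteq> 0" using False by (simp add: w_def)
    have MV: "norm (F y - F x - F' x (y - x)) \<le> norm (y - x) * \<eta>"
    proof (rule differentiable_bound_linearization[where a=x and b=y and S=S and f=F and f'="\<lambda>u. blinfun_apply (F' u)"])
      show "\<And>t. t \<in> {0..1} \<Longrightarrow> x + t *\<^sub>R (y - x) \<in> S"
        using seg_ball xS yS unfolding S_def by auto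
      show "\<And>u. u \<in> S \<Longrightarrow> (F has_derivative blinfun_apply (F' u)) (at u within S)"
        using derF SV has_derivative_at_withinI by blast
      show "x \<in> S" by fact
      fix u assume uS: "u \<in> S"
      have "onorm (blinfun_apply (F' u) - blinfun_apply (F' x)) = norm (F' u - F' x)"
        by (simp add: norm_blinfun.rep_eq minus_blinfun.rep_eq fun_diff_def)
      also have "\<dots> \<le> dist (F' u) (F' xbar) + dist (F' x) (F' xbar)"
        using dist_triangle[of "F' u" "F' x" "F' xbar"] norm_minus_commute[of "F' xbar" "F' x"] by (simp add: dist_norm)
      also have "\<dots> \<le> \<eta>" using SF'[OF uS] SF'[OF xS] by simp
      finally show "onorm (blinfun_apply (F' u) - blinfun_apply (F' x)) \<le> \<eta>" .
    qed
    define tk where "tk k = 1 / real (Suc k)" for k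
    have tk0: "tk k > 0" "tk k \<le> 1" for k by (simp_all add: tk_def)
    have tklim: "tk \<longlonglongrightarrow> 0" unfolding tk_def by (rule LIMSEQ_Suc[OF lim_1_over_n])
    define zk where "zk k = x + tk k *\<^sub>R w" for k
    have zkS: "zk k \<in> S" for k
      using seg_ball[of x xbar \<delta> y "tk k"] xS yS tk0[of k] by (simp add: S_def zk_def w_def)
    have FxD: "F x \<in> D" and FyD: "F y \<in> D" using xX yX xS yS SV XV by blast+
    have cD: "F x + tk k *\<^sub>R (F y - F x) \<in> D" for k
    proof -
      have "(1 - tk k) *\<^sub>R F x + tk k *\<^sub>R F y \<in> D"
        using Convex.convexD[OF convexD FxD FyD, of "1 - tk k" "tk k"] tk0[of k] by simp
      moreover have "(1 - tk k) *\<^sub>R F x + tk k *\<^sub>R F y = F x + tk k *\<^sub>R (F y - F x)"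
        by (simp add: algebra_simps)
      ultimately show ?thesis by simp
    qed
    define e where "e k = F (zk k) - F x - F' x (zk k - x)" for k
    have infb: "infdist (F (zk k)) D \<le> norm (e k) + tk k * (\<eta> * norm w)" for k
    proof -
      have "infdist (F (zk k)) D \<le> dist (F (zk k)) (F x + tk k *\<^sub>R (F y - F x))"
        by (rule infdist_le[OF cD])
      also have "F (zk k) - (F x + tk k *\<^sub>R (F y - F x)) = e k + tk k *\<^sub>R (F' x w - (F y - F x))"
        by (simp add: e_def zk_def blinfun.scaleR_right algebra_simps)
      then have "dist (F (zk k)) (F x + tk k *\<^sub>R (F y - F x)) = norm (e k + tk k *\<^sub>R (F' x w - (F y - F x)))"
        by (simp add: dist_norm)
      also have "\<dots> \<le> norm (e k) + norm (tk k *\<^sub>R (F' x w - (F y - F x)))" by (rule norm_triangle_ineq)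
      also have "norm (tk k *\<^sub>R (F' x w - (F y - F x))) = tk k * norm (F y - F x - F' x w)"
        using tk0[of k] by (simp add: norm_minus_commute)
      also have "tk k * norm (F y - F x - F' x w) \<le> tk k * (\<eta> * norm w)"
        using MV tk0[of k] by (intro mult_left_mono) (simp_all add: w_def mult.commute)
      finally show ?thesis by simp
    qed
    have "\<forall>k. \<exists>p. p \<in> X \<and> dist (zk k) p \<le> \<kappa> * infdist (F (zk k)) D"
      using eb S\<rho>[OF zkS] by blast
    then obtain p where pX: "\<And>k. p k \<in> X" and pd: "\<And>k. dist (zk k) (p k) \<le> \<kappa> * infdist (F (zk k)) D"
      by metis
    define q where "q k = (1 / tk k) *\<^sub>R (p k - x)" for k
    define rr where "rr k = norm (e k) / tk k" for k
    have qw: "norm (q k - w) \<le> \<kappa> * rr k + \<epsilon> * norm w" for k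
    proof -
      have "q k - w = (1 / tk k) *\<^sub>R (p k - zk k)"
        using tk0[of k] by (simp add: q_def zk_def algebra_simps)
      then have "norm (q k - w) = dist (zk k) (p k) / tk k"
        using tk0[of k] by (simp add: dist_norm norm_minus_commute divide_inverse_commute)
      also have "\<dots> \<le> \<kappa> * (norm (e k) + tk k * (\<eta> * norm w)) / tk k"
        using pd[of k] infb[of k] \<kappa> tk0[of k] by (intro divide_right_mono) (auto intro: order_trans mult_left_mono)
      also have "\<dots> = \<kappa> * rr k + \<epsilon> * norm w"
        using tk0[of k] \<kappa> by (simp add: rr_def \<eta>_def field_simps)
      finally show ?thesis .
    qed
    have rrlim: "rr \<longlonglongrightarrow> 0"
    proof -
      have "(F has_derivative F' x) (at x)" using derF xS SV by blast
      then have D0: "((\<lambda>z. norm (F z - F x - F' x (z - x)) / norm (z - x)) \<longlongrightarrow> 0) (at x)"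
        using has_derivative_iff_norm by blast
      have zlim: "zk \<longlonglongrightarrow> x"
        using tendsto_add[OF tendsto_const[of x] tendsto_scaleR[OF tklim tendsto_const[of w]]]
        by (simp add: zk_def[abs_def])
      have "filterlim zk (at x) sequentially"
      proof (intro filterlim_atI zlim always_eventually allI)
        fix k show "zk k \<noteq> x" using tk0[of k] w0 by (simp add: zk_def)
      qed
      from filterlim_compose[OF D0 this]
      have "(\<lambda>k. norm (e k) / norm (zk k - x)) \<longlonglongrightarrow> 0" by (simp add: e_def)
      then have "(\<lambda>k. norm w * (norm (e k) / norm (zk k - x))) \<longlonglongrightarrow> norm w * 0"
        by (intro tendsto_mult tendsto_const)
      moreover have "norm w * (norm (e k) / norm (zk k - x)) = rr k" for k
        using tk0[of k] w0 by (simp add: zk_def rr_def)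
      ultimately show ?thesis by simp
    qed
    have "Bseq rr" using rrlim convergent_imp_Bseq convergentI by blast
    then obtain B where B: "\<And>k. norm (rr k) \<le> B" using Bseq_def by blast
    have "norm (q k) \<le> norm w + \<kappa> * B + \<epsilon> * norm w" for k
    proof -
      have "norm (q k) \<le> norm w + norm (q k - w)" using norm_triangle_ineq[of w "q k - w"] by simp
      also have "\<dots> \<le> norm w + (\<kappa> * rr k + \<epsilon> * norm w)" using qw[of k] by simp
      also have "\<kappa> * rr k \<le> \<kappa> * B" using B[of k] \<kappa> by (intro mult_left_mono) auto
      finally show ?thesis by simp
    qed
    then have "bounded (range q)" by (intro boundedI) blast
    then obtain v \<sigma> where \<sigma>: "strict_mono \<sigma>" and qlim: "(q \<circ> \<sigma>) \<longlonglongrightarrow> v"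
      using bounded_imp_convergent_subsequence by blast
    have qlim': "(\<lambda>k. q (\<sigma> k)) \<longlonglongrightarrow> v" using qlim by (simp add: o_def)
    have tklim': "(\<lambda>k. tk (\<sigma> k)) \<longlonglongrightarrow> 0" using LIMSEQ_subseq_LIMSEQ[OF tklim \<sigma>] by (simp add: o_def)
    have rrlim': "(\<lambda>k. rr (\<sigma> k)) \<longlonglongrightarrow> 0" using LIMSEQ_subseq_LIMSEQ[OF rrlim \<sigma>] by (simp add: o_def)
    have vw: "norm (v - w) \<le> \<epsilon> * norm w"
    proof -
      have l1: "(\<lambda>k. norm (q (\<sigma> k) - w)) \<longlonglongrightarrow> norm (v - w)"
        by (intro tendsto_intros qlim')
      have l2: "(\<lambda>k. \<kappa> * rr (\<sigma> k) + \<epsilon> * norm w) \<longlonglongrightarrow> \<kappa> * 0 + \<epsilon> * norm w"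
        by (intro tendsto_intros rrlim')
      have "norm (v - w) \<le> \<kappa> * 0 + \<epsilon> * norm w"
        by (rule LIMSEQ_le[OF l1 l2]) (use qw in blast)
      then show ?thesis by simp
    qed
    have pq: "p k = x + tk k *\<^sub>R q k" for k
      using tk0[of k] by (simp add: q_def)
    have vT: "v \<in> tangent_cone X x"
    proof -
      have plim: "(\<lambda>k. p (\<sigma> k)) \<longlonglongrightarrow> x"
        using tendsto_add[OF tendsto_const[of x] tendsto_scaleR[OF tklim' qlim']] by (simp add: pq)
      have "(\<forall>r. tk (\<sigma> r) > 0) \<and> (\<lambda>r. tk (\<sigma> r)) \<longlonglongrightarrow> 0 \<and> (\<forall>r. p (\<sigma> r) \<in> X) \<and>
          (\<lambda>r. p (\<sigma> r)) \<longlonglongrightarrow> x \<and> (\<lambda>r. (1 / tk (\<sigma> r)) *\<^sub>R (p (\<sigma> r) - x)) \<longlonglongrightarrow> v"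
        using tk0 tklim' pX plim qlim' by (simp add: q_def)
      then show ?thesis unfolding tangent_cone_def by (intro CollectI exI)
    qed
    have "x + v \<in> (\<lambda>v. x + v) ` tangent_cone X x" using vT by blast
    then have "infdist y ((\<lambda>v. x + v) ` tangent_cone X x) \<le> dist y (x + v)" by (rule infdist_le)
    also have "dist y (x + v) = norm (v - w)"
      by (simp add: dist_norm w_def norm_minus_commute algebra_simps)
    also have "\<dots> \<le> \<epsilon> * norm (x - y)" using vw by (simp add: w_def norm_minus_commute)
    finally show ?thesis .
  qed
  show "\<exists>\<delta>>0. \<forall>x\<in>X. \<forall>y\<in>X. dist x xbar < \<delta> \<and> dist y xbar < \<delta> \<longrightarrow>
        infdist y ((\<lambda>v. x + v) ` tangent_cone X x) \<le> \<epsilon> * norm (x - y)"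
  proof (intro exI[of _ \<delta>] conjI ballI impI)
    show "\<delta> > 0" using \<rho> R0 R3 by (simp add: \<delta>_def)
  next
    fix x y assume "x \<in> X" "y \<in> X" "dist x xbar < \<delta> \<and> dist y xbar < \<delta>"
    then show "infdist y ((\<lambda>v. x + v) ` tangent_cone X x) \<le> \<epsilon> * norm (x - y)"
      using main by (simp add: S_def dist_commute)
  qed
qed


lemma near_radial: "nearly_radial X xbar"
  unfolding nearly_radial_def
proof (intro allI impI)
  fix \<epsilon> :: real assume "\<epsilon> > 0"
  then obtain \<delta> where \<delta>: "\<delta> > 0" and H: "\<forall>x\<in>X. \<forall>y\<in>X. dist x xbar < \<delta> \<and> dist y xbar < \<delta> \<longrightarrow>
        infdist y ((\<lambda>v. x + v) ` tangent_cone X x) \<le> \<epsilon> * norm (x - y)"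
    using near_convex unfolding nearly_convex_def by blast
  show "\<exists>\<delta>>0. \<forall>x\<in>X. dist x xbar < \<delta> \<longrightarrow>
        infdist xbar ((\<lambda>v. x + v) ` tangent_cone X x) \<le> \<epsilon> * norm (x - xbar)"
    using \<delta> H xbarX by auto
qed

end

theorem theorem8p2:
  fixes X :: "'a::euclidean_space set" and xbar :: 'a
  assumes "xbar \<in> X"
    and "amenable TYPE('b::euclidean_space) X xbar"
  shows "nearly_convex X xbar \<and> nearly_radial X xbar"
proof -
  obtain V and F :: "'a \<Rightarrow> 'b" and F' and D where
    "open V \<and> xbar \<in> V \<and>
        (\<forall>x\<in>V. (F has_derivative blinfun_apply (F' x)) (at x)) \<and> continuous_on V F' \<and>
        closed D \<and> convex D \<and>
        X \<inter> V = {x\<in>V. F x \<in> D} \<and>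
        (\<forall>w. w \<in> normal_cone_convex D (F xbar) \<and> (\<forall>h. inner w (F' xbar h) = 0) \<longrightarrow> w = 0)"
    using assms(2) unfolding amenable_def by blast
  then interpret amen X xbar V F F' D
    using assms(1) by unfold_locales blast+
  show ?thesis using near_convex near_radial by blast
qed

end
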